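(* Let $\Gamma$ be a simple, undirected, connected $r$-regular graph of order $p$ that contains a cycle and has girth $g(\Gamma)\ge 7$. Then $\gamma_{[3R]}(\Gamma)\le 2p-2r^2+3r-2$.
   Context: The girth of a graph is the minimum length of a cycle in it. For a graph $\Gamma=(V,E)$ and $h:V\to\{0,1,2,3,4\}$, let $AN(v)=\{w\in N(v):h(w)\ge 1\}$, $AN[v]=AN(v)\cup\{v\}$ and $h(S)=\sum_{u\in S}h(u)$. $h$ is a triple Roman dominating function (3RDF) if every $v$ with $h(v)<3$ satisfies $h(AN[v])\ge|AN(v)|+3$. The triple Roman domination number $\gamma_{[3R]}(\Gamma)$ is the minimum weight $h(V)$ of a 3RDF of $\Gamma$. *)

theory Defs
  imports Main
begin

definition simple_graph :: "'a set \<Rightarrow> ('a \<Rightarrow> 'a \<Rightarrow> bool) \<Rightarrow> bool" where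
  "simple_graph V E \<longleftrightarrow> finite V \<and> (\<forall>u v. E u v \<longrightarrow> u \<in> V \<and> v \<in> V)
     \<and> (\<forall>u v. E u v \<longrightarrow> E v u) \<and> (\<forall>v. \<not> E v v)"

definition nbhd :: "'a set \<Rightarrow> ('a \<Rightarrow> 'a \<Rightarrow> bool) \<Rightarrow> 'a \<Rightarrow> 'a set" where
  "nbhd V E v = {w \<in> V. E v w}"

definition regular :: "'a set \<Rightarrow> ('a \<Rightarrow> 'a \<Rightarrow> bool) \<Rightarrow> nat \<Rightarrow> bool" where
  "regular V E r \<longleftrightarrow> (\<forall>v\<in>V. card (nbhd V E v) = r)"

definition connected_graph :: "'a set \<Rightarrow> ('a \<Rightarrow> 'a \<Rightarrow> bool) \<Rightarrow> bool" where
  "connected_graph V E \<longleftrightarrow> (\<forall>u\<in>V. \<forall>v\<in>V. E\<^sup>*\<^sup>* u v)"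

definition is_cycle :: "'a set \<Rightarrow> ('a \<Rightarrow> 'a \<Rightarrow> bool) \<Rightarrow> 'a list \<Rightarrow> bool" where
  "is_cycle V E vs \<longleftrightarrow> length vs \<ge> 3 \<and> distinct vs \<and> set vs \<subseteq> V
     \<and> (\<forall>i. Suc i < length vs \<longrightarrow> E (vs ! i) (vs ! Suc i))
     \<and> E (last vs) (hd vs)"

definition has_cycle :: "'a set \<Rightarrow> ('a \<Rightarrow> 'a \<Rightarrow> bool) \<Rightarrow> bool" where
  "has_cycle V E \<longleftrightarrow> (\<exists>vs. is_cycle V E vs)"

text \<open>Girth: minimum length of a cycle (meaningful when a cycle exists).\<close>

definition girth :: "'a set \<Rightarrow> ('a \<Rightarrow> 'a \<Rightarrow> bool) \<Rightarrow> nat" where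
  "girth V E = Inf {length vs | vs. is_cycle V E vs}"

definition active_nbhd :: "'a set \<Rightarrow> ('a \<Rightarrow> 'a \<Rightarrow> bool) \<Rightarrow> ('a \<Rightarrow> nat) \<Rightarrow> 'a \<Rightarrow> 'a set" where
  "active_nbhd V E h v = {w \<in> nbhd V E v. h w \<ge> 1}"

definition is_3RDF :: "'a set \<Rightarrow> ('a \<Rightarrow> 'a \<Rightarrow> bool) \<Rightarrow> ('a \<Rightarrow> nat) \<Rightarrow> bool" where
  "is_3RDF V E h \<longleftrightarrow> (\<forall>v\<in>V. h v \<le> 4) \<and> (\<forall>v. v \<notin> V \<longrightarrow> h v = 0)
     \<and> (\<forall>v\<in>V. h v < 3 \<longrightarrow>
          sum h (insert v (active_nbhd V E h v)) \<ge> card (active_nbhd V E h v) + 3)"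

definition triple_roman_domination_number :: "'a set \<Rightarrow> ('a \<Rightarrow> 'a \<Rightarrow> bool) \<Rightarrow> nat" where
  "triple_roman_domination_number V E = Min {sum h V | h. is_3RDF V E h}"

end

theory Submission
  imports Defs
begin


fun chain :: "('a \<Rightarrow> 'a \<Rightarrow> bool) \<Rightarrow> 'a list \<Rightarrow> bool" where
  "chain E [] = True" | "chain E [x] = True" | "chain E (x # y # zs) = (E x y \<and> chain E (y # zs))"

lemma chain_nth: "chain E vs \<Longrightarrow> Suc i < length vs \<Longrightarrow> E (vs ! i) (vs ! Suc i)"
proof (induction E vs arbitrary: i rule: chain.induct)
  case (3 E x y zs)
  then show ?case by (cases i) auto
qed auto

definition Aset :: "'a set \<Rightarrow> ('a \<Rightarrow> 'a \<Rightarrow> bool) \<Rightarrow> 'a \<Rightarrow> 'a \<Rightarrow> 'a set" where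
  "Aset V E u v = nbhd V E u - {v}"
definition Bset :: "'a set \<Rightarrow> ('a \<Rightarrow> 'a \<Rightarrow> bool) \<Rightarrow> 'a \<Rightarrow> 'a \<Rightarrow> 'a set" where
  "Bset V E u v = (\<Union>a\<in>Aset V E u v. nbhd V E a - {u})"

lemma cond_gen:
  assumes sg: "simple_graph V E" and x: "x \<in> V" and S: "S \<subseteq> active_nbhd V E h x"
    and hs: "h x + (\<Sum>w\<in>S. (h w - 1)) \<ge> 3"
  shows "sum h (insert x (active_nbhd V E h x)) \<ge> card (active_nbhd V E h x) + 3"
proof -
  let ?AN = "active_nbhd V E h x"
  have fin: "finite ?AN" using sg unfolding simple_graph_def active_nbhd_def nbhd_def by auto
  have nx: "x \<notin> ?AN" using sg unfolding simple_graph_def active_nbhd_def nbhd_def by auto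
  have 1: "sum h (insert x ?AN) = h x + sum h ?AN" using fin nx by simp
  have "sum h ?AN = (\<Sum>w\<in>?AN. (h w - 1) + 1)"
    by (rule sum.cong) (auto simp: active_nbhd_def)
  also have "\<dots> = (\<Sum>w\<in>?AN. (h w - 1)) + card ?AN" by (simp add: sum.distrib del: Suc_diff_1 One_nat_def)
  finally have 2: "sum h ?AN = (\<Sum>w\<in>?AN. (h w - 1)) + card ?AN" .
  have "(\<Sum>w\<in>S. (h w - 1)) \<le> (\<Sum>w\<in>?AN. (h w - 1))"
    by (rule sum_mono2[OF fin S]) auto
  then show ?thesis using 1 2 hs by linarith
qed

lemma cond1:
  assumes "simple_graph V E" "x \<in> V" "E x w" "h x + (h w - 1) \<ge> 3" "h w \<ge> 1"
  shows "sum h (insert x (active_nbhd V E h x)) \<ge> card (active_nbhd V E h x) + 3"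
  apply (rule cond_gen[where S="{w}"])
  using assms unfolding simple_graph_def active_nbhd_def nbhd_def by auto

lemma cond2:
  assumes "simple_graph V E" "x \<in> V" "E x w" "E x w'" "w \<noteq> w'" "h x + (h w - 1) + (h w' - 1) \<ge> 3" "h w \<ge> 1" "h w' \<ge> 1"
  shows "sum h (insert x (active_nbhd V E h x)) \<ge> card (active_nbhd V E h x) + 3"
  apply (rule cond_gen[where S="{w,w'}"])
  using assms unfolding simple_graph_def active_nbhd_def nbhd_def by auto

locale g7 =
  fixes V :: "'a set" and E :: "'a \<Rightarrow> 'a \<Rightarrow> bool" and r :: nat and u v :: 'a
  assumes sg: "simple_graph V E" and reg: "regular V E r"
    and gir: "\<And>vs. is_cycle V E vs \<Longrightarrow> 7 \<le> length vs"
    and uv: "E u v" and r2: "r \<ge> 2"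
begin

lemma EV: "E x y \<Longrightarrow> x \<in> V" "E x y \<Longrightarrow> y \<in> V"
  using sg unfolding simple_graph_def by auto
lemma Esym: "E x y \<Longrightarrow> E y x" using sg unfolding simple_graph_def by auto
lemma neq: "E x y \<Longrightarrow> x \<noteq> y" using sg unfolding simple_graph_def by auto
lemma finV: "finite V" using sg unfolding simple_graph_def by auto
lemma memN: "w \<in> nbhd V E x \<longleftrightarrow> E x w" using EV unfolding nbhd_def by auto
lemma cardN: "x \<in> V \<Longrightarrow> card (nbhd V E x) = r" using reg unfolding regular_def by auto
lemma finN: "finite (nbhd V E x)" using finV unfolding nbhd_def by auto

lemma cyc: "is_cycle V E vs \<Longrightarrow> length vs < 7 \<Longrightarrow> False" using gir by fastforce

lemma mkcyc: "3 \<le> length vs \<Longrightarrow> distinct vs \<Longrightarrow> chain E vs \<Longrightarrow> E (last vs) (hd vs) \<Longrightarrow> is_cycle V E vs"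
  unfolding is_cycle_def
proof (intro conjI allI impI)
  assume "chain E vs" "E (last vs) (hd vs)" "3 \<le> length vs"
  then show "set vs \<subseteq> V"
  proof -
    have "\<forall>x\<in>set vs. x \<in> V"
    proof
      fix x assume "x \<in> set vs"
      then obtain i where i: "i < length vs" "vs ! i = x" by (auto simp: in_set_conv_nth)
      show "x \<in> V"
      proof (cases "Suc i < length vs")
        case True then show ?thesis using chain_nth[OF \<open>chain E vs\<close> True] EV i by auto
      next
        case False then have "i = length vs - 1" using i by auto
        then have "x = last vs" using i \<open>3 \<le> length vs\<close> by (metis last_conv_nth list.size(3) not_numeral_le_zero)
        then show ?thesis using EV \<open>E (last vs) (hd vs)\<close> by auto
      qed
    qed
    then show ?thesis by auto
  qed
qed (auto intro: chain_nth)

lemma no3: "E a b \<Longrightarrow> E b c \<Longrightarrow> E c a \<Longrightarrow> False"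
  apply (rule cyc[of "[a,b,c]"])
   apply (rule mkcyc) using neq by auto

lemma no4: "E a b \<Longrightarrow> E b c \<Longrightarrow> E c d \<Longrightarrow> E d a \<Longrightarrow> a \<noteq> c \<Longrightarrow> b \<noteq> d \<Longrightarrow> False"
  apply (rule cyc[of "[a,b,c,d]"])
   apply (rule mkcyc) using neq by auto

lemma no5: "E a b \<Longrightarrow> E b c \<Longrightarrow> E c d \<Longrightarrow> E d e \<Longrightarrow> E e a \<Longrightarrow>
   a \<noteq> c \<Longrightarrow> a \<noteq> d \<Longrightarrow> b \<noteq> d \<Longrightarrow> b \<noteq> e \<Longrightarrow> c \<noteq> e \<Longrightarrow> False"
  apply (rule cyc[of "[a,b,c,d,e]"])
   apply (rule mkcyc) using neq by auto

lemma no6: "E a b \<Longrightarrow> E b c \<Longrightarrow> E c d \<Longrightarrow> E d e \<Longrightarrow> E e f \<Longrightarrow> E f a \<Longrightarrow>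
   a \<noteq> c \<Longrightarrow> a \<noteq> d \<Longrightarrow> a \<noteq> e \<Longrightarrow> b \<noteq> d \<Longrightarrow> b \<noteq> e \<Longrightarrow> b \<noteq> f \<Longrightarrow> c \<noteq> e \<Longrightarrow> c \<noteq> f \<Longrightarrow> d \<noteq> f \<Longrightarrow> False"
  apply (rule cyc[of "[a,b,c,d,e,f]"])
   apply (rule mkcyc) using neq by auto

end


context g7 begin

lemma memA: "a \<in> Aset V E u v \<longleftrightarrow> E u a \<and> a \<noteq> v"
  unfolding Aset_def by (auto simp: memN)
lemma memB: "b \<in> Bset V E u v \<longleftrightarrow> (\<exists>a. E u a \<and> a \<noteq> v \<and> E a b \<and> b \<noteq> u)"
  unfolding Bset_def by (auto simp: memA memN)

lemma F1: "E u a \<Longrightarrow> E v a \<Longrightarrow> False"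
  using no3[of u a v] uv Esym by blast

lemma F3: assumes "E u a" "a \<noteq> v" "E a b" "b \<noteq> u"
  shows "b \<noteq> v" "\<not> E u b" "\<not> E v b"
  using no3[of u a v] no3[of u a b] no4[of u a b v] assms uv Esym by blast+

lemma F4: "E u a \<Longrightarrow> E u a' \<Longrightarrow> a \<noteq> a' \<Longrightarrow> E a b \<Longrightarrow> E a' b \<Longrightarrow> b \<noteq> u \<Longrightarrow> False"
  using no4[of u a b a'] Esym by blast

lemma F5: assumes "E u a" "a \<noteq> v" "E a b" "b \<noteq> u" "E v a'" "a' \<noteq> u" "E a' b"
  shows False
proof -
  have "a \<noteq> a'" using F1 assms by blast
  moreover have "b \<noteq> v" using F3 assms by blast
  ultimately show False using no5[of u a b a' v] assms uv Esym by blast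
qed

lemma F10: assumes "E u a" "a \<noteq> v" "E a b" "b \<noteq> u" "E u a'" "a' \<noteq> v" "E a' b'" "b' \<noteq> u"
  "E b w" "E b' w" "w \<noteq> u" "\<not> E u w" "\<not> E a w" "\<not> E a' w"
  shows "b = b'"
proof (rule ccontr)
  assume nb: "b \<noteq> b'"
  have fa: "\<not> E u b" "\<not> E u b'" "b \<noteq> v" "b' \<noteq> v" using F3 assms by blast+
  show False
  proof (cases "a = a'")
    case True
    then show False using no4[of a b w b'] assms nb Esym by blast
  next
    case False
    have "a \<noteq> w" "a' \<noteq> w" using assms by auto
    moreover have "a \<noteq> b'" "a' \<noteq> b" using fa assms by auto
    ultimately show False using no6[of u a b w b' a'] assms nb False Esym fa by blast
  qed
qed

lemma cardA: "card (Aset V E u v) = r - 1"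
  unfolding Aset_def using cardN[OF EV(1)[OF uv]] finN uv memN by (simp add: card_Diff_singleton)

lemma cardB: "card (Bset V E u v) = (r - 1) * (r - 1)"
proof -
  have "card (Bset V E u v) = (\<Sum>a\<in>Aset V E u v. card (nbhd V E a - {u}))"
    unfolding Bset_def
  proof (rule card_UN_disjoint)
    show "finite (Aset V E u v)" unfolding Aset_def using finN by auto
    show "\<forall>i\<in>Aset V E u v. finite (nbhd V E i - {u})" using finN by auto
    show "\<forall>i\<in>Aset V E u v. \<forall>j\<in>Aset V E u v. i \<noteq> j \<longrightarrow> (nbhd V E i - {u}) \<inter> (nbhd V E j - {u}) = {}"
      using F4 by (auto simp: memA memN)
  qed
  also have "\<dots> = (\<Sum>a\<in>Aset V E u v. r - 1)"
  proof (rule sum.cong)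
    fix a assume "a \<in> Aset V E u v"
    then have "E a u" "a \<in> V" using Esym EV by (auto simp: memA)
    then show "card (nbhd V E a - {u}) = r - 1" using cardN finN memN by (simp add: card_Diff_singleton)
  qed simp
  also have "\<dots> = (r - 1) * (r - 1)" using cardA by simp
  finally show ?thesis .
qed

end



lemma arith1:
  fixes r p :: nat
  assumes "r \<ge> 2" "2 + 2*(r-1) + 2*((r-1)*(r-1)) \<le> p"
  shows "int (4*(2*(r-1)) + 2*(p - (2 + 2*(r-1) + 2*((r-1)*(r-1)))))
           \<le> 2 * int p - 2 * int r ^ 2 + 3 * int r - 2"
proof -
  obtain s where s: "r = s + 1" "s \<ge> 1" using assms by (intro that[of "r - 1"]) auto
  have "(2*int s - 3) * (int s - 1) \<ge> 0"
  proof (cases "s = 1")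
    case False then have "s \<ge> 2" using s by auto
    then show ?thesis by (intro mult_nonneg_nonneg) auto
  qed simp
  then show ?thesis using assms s by (simp add: of_nat_diff algebra_simps power2_eq_square)
qed

lemma tr_le:
  assumes "simple_graph V E" "is_3RDF V E h"
  shows "triple_roman_domination_number V E \<le> sum h V"
  unfolding triple_roman_domination_number_def
proof (rule Min_le)
  show "sum h V \<in> {sum h V |h. is_3RDF V E h}" using assms by auto
  have "{sum h V |h. is_3RDF V E h} \<subseteq> {..4 * card V}"
  proof
    fix n assume "n \<in> {sum h V |h. is_3RDF V E h}"
    then obtain g where g: "n = sum g V" "is_3RDF V E g" by auto
    have "sum g V \<le> sum (\<lambda>_. 4) V" by (rule sum_mono) (use g in \<open>auto simp: is_3RDF_def\<close>)
    then show "n \<in> {..4 * card V}" using g by auto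
  qed
  then show "finite {sum h V |h. is_3RDF V E h}" by (rule finite_subset) simp
qed



context g7 begin

lemma sw: "g7 V E r v u"
  using sg reg gir uv r2 Esym by unfold_locales auto

lemma main: "int (triple_roman_domination_number V E)
           \<le> 2 * int (card V) - 2 * int r ^ 2 + 3 * int r - 2"
proof -
  define Au where "Au = Aset V E u v"
  define Av where "Av = Aset V E v u"
  define Bu where "Bu = Bset V E u v"
  define Bv where "Bv = Bset V E v u"
  define Ball where "Ball = {u,v} \<union> (Au \<union> Av) \<union> (Bu \<union> Bv)"
  have mAu: "\<And>x. x \<in> Au \<longleftrightarrow> E u x \<and> x \<noteq> v" unfolding Au_def by (rule memA)
  have mAv: "\<And>x. x \<in> Av \<longleftrightarrow> E v x \<and> x \<noteq> u" unfolding Av_def by (rule g7.memA[OF sw])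
  have mBu: "\<And>x. x \<in> Bu \<longleftrightarrow> (\<exists>a. E u a \<and> a \<noteq> v \<and> E a x \<and> x \<noteq> u)" unfolding Bu_def by (rule memB)
  have mBv: "\<And>x. x \<in> Bv \<longleftrightarrow> (\<exists>a. E v a \<and> a \<noteq> u \<and> E a x \<and> x \<noteq> v)" unfolding Bv_def by (rule g7.memB[OF sw])
  have uv': "E v u" "u \<noteq> v" using uv Esym neq by auto
  have F3v: "\<And>a b. E v a \<Longrightarrow> a \<noteq> u \<Longrightarrow> E a b \<Longrightarrow> b \<noteq> v \<Longrightarrow> b \<noteq> u \<and> \<not> E v b \<and> \<not> E u b"
    using g7.F3[OF sw] by blast
  have F1': "\<And>a. E u a \<Longrightarrow> E v a \<Longrightarrow> False" using F1 by blast
  have BallV: "Ball \<subseteq> V" unfolding Ball_def using EV uv by (auto simp: mAu mAv mBu mBv)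
  have finB: "finite Ball" using BallV finV finite_subset by blast
  have d1: "{u,v} \<inter> (Au \<union> Av) = {}" using neq by (auto simp: mAu mAv)
  have d2: "Au \<inter> Av = {}" using F1' by (auto simp: mAu mAv)
  have nBu: "x \<noteq> u \<and> x \<noteq> v \<and> x \<notin> Au \<and> x \<notin> Av" if xB: "x \<in> Bu" for x
  proof -
    obtain a where "E u a" "a \<noteq> v" "E a x" "x \<noteq> u" using xB unfolding mBu by blast
    then show ?thesis using F3[of a x] by (simp add: mAu mAv)
  qed
  have nBv: "x \<noteq> u \<and> x \<noteq> v \<and> x \<notin> Au \<and> x \<notin> Av" if xB: "x \<in> Bv" for x
  proof -
    obtain a where "E v a" "a \<noteq> u" "E a x" "x \<noteq> v" using xB unfolding mBv by blast
    then show ?thesis using F3v[of a x] by (simp add: mAu mAv)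
  qed
  have d3: "({u,v} \<union> (Au \<union> Av)) \<inter> (Bu \<union> Bv) = {}"
    using nBu nBv by blast
  have d4: "Bu \<inter> Bv = {}"
    using F5 by (auto simp: mBu mBv)
  have fins: "finite Au" "finite Av" "finite Bu" "finite Bv" using finB unfolding Ball_def by auto
  have cA: "card (Au \<union> Av) = 2 * (r - 1)"
    using card_Un_disjoint[OF fins(1,2) d2] cardA g7.cardA[OF sw] unfolding Au_def Av_def by simp
  have cB: "card (Bu \<union> Bv) = 2 * ((r - 1) * (r - 1))"
    using card_Un_disjoint[OF fins(3,4) d4] cardB g7.cardB[OF sw] unfolding Bu_def Bv_def by simp
  have cBall: "card Ball = 2 + 2*(r-1) + 2*((r-1)*(r-1))"
  proof -
    have "card Ball = card ({u,v} \<union> (Au \<union> Av)) + card (Bu \<union> Bv)"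
      unfolding Ball_def by (rule card_Un_disjoint) (use fins d3 in auto)
    also have "card ({u,v} \<union> (Au \<union> Av)) = 2 + card (Au \<union> Av)"
      using card_Un_disjoint[of "{u,v}" "Au \<union> Av"] fins d1 uv' by simp
    finally show ?thesis using cA cB by simp
  qed
  have outside: "y \<noteq> u \<and> y \<noteq> v \<and> y \<notin> Au \<and> y \<notin> Av" if w: "w \<in> V - Ball" "E w y" for w y
  proof -
    have w': "w \<noteq> u" "w \<noteq> v" "w \<notin> Au" "w \<notin> Av" "w \<notin> Bu" "w \<notin> Bv" using w(1) unfolding Ball_def by auto
    have "E y w" using w(2) Esym by blast
    show ?thesis
    proof (intro conjI notI)
      assume "y = u" then show False using w' \<open>E y w\<close> by (simp add: mAu)
    next
      assume "y = v" then show False using w' \<open>E y w\<close> by (simp add: mAv)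
    next
      assume "y \<in> Au"
      then have "E u y" "y \<noteq> v" by (simp_all add: mAu)
      then have "w \<in> Bu" unfolding mBu using \<open>E y w\<close> w'(1) by blast
      then show False using w' by blast
    next
      assume "y \<in> Av"
      then have "E v y" "y \<noteq> u" by (simp_all add: mAv)
      then have "w \<in> Bv" unfolding mBv using \<open>E y w\<close> w'(2) by blast
      then show False using w' by blast
    qed
  qed
  show ?thesis
  proof (cases "\<exists>w\<in>V - Ball. \<forall>y. E w y \<longrightarrow> y \<in> Bu \<union> Bv")
    case False
    define h where "h x = (if x \<in> Au \<union> Av then 4 else if x \<in> {u,v} \<union> Bu \<union> Bv then 0
        else if x \<in> V then 2 else (0::nat))" for x
    have h3: "is_3RDF V E h"
      unfolding is_3RDF_def
    proof (intro conjI ballI allI impI)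
      fix x assume "x \<in> V" then show "h x \<le> 4" unfolding h_def by auto
    next
      fix x assume "x \<notin> V" then show "h x = 0" using BallV unfolding h_def Ball_def by auto
    next
      fix x assume xV: "x \<in> V" and hx: "h x < 3"
      show "card (active_nbhd V E h x) + 3 \<le> sum h (insert x (active_nbhd V E h x))"
      proof (cases "x \<in> Ball")
        case True
        then have "x \<in> {u,v} \<union> (Bu \<union> Bv)" using hx unfolding Ball_def h_def by auto
        then have "x = u \<or> x = v \<or> x \<in> Bu \<or> x \<in> Bv" by auto
        then have "\<exists>a. E x a \<and> a \<in> Au \<union> Av"
        proof (elim disjE)
          assume "x = u"
          have "Au \<noteq> {}" using cardA r2 unfolding Au_def by auto
          then obtain a where "a \<in> Au" by blast
          then show ?thesis using \<open>x = u\<close> by (auto simp: mAu)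
        next
          assume "x = v"
          have "Av \<noteq> {}" using g7.cardA[OF sw] r2 unfolding Av_def by auto
          then obtain a where "a \<in> Av" by blast
          then show ?thesis using \<open>x = v\<close> by (auto simp: mAv)
        next
          assume "x \<in> Bu"
          then show ?thesis using Esym by (auto simp: mAu mBu)
        next
          assume "x \<in> Bv"
          then show ?thesis using Esym by (auto simp: mAv mBv)
        qed
        then obtain a where a: "E x a" "a \<in> Au \<union> Av" by blast
        show ?thesis by (rule cond1[OF sg xV a(1)]) (use a in \<open>auto simp: h_def\<close>)
      next
        case xB: False
        then obtain y where y: "E x y" "y \<notin> Bu \<union> Bv" using False xV by auto
        have "h y = 2" using outside[of x y] xB xV y EV unfolding h_def by auto
        moreover have "h x = 2" using xB xV unfolding h_def Ball_def by auto
        ultimately show ?thesis by (intro cond1[OF sg xV y(1)]) auto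
      qed
    qed
    have "sum h V = sum h Ball + sum h (V - Ball)"
      using sum.subset_diff[OF BallV finV] by (simp add: add.commute)
    also have "sum h (V - Ball) = 2 * card (V - Ball)"
      unfolding Ball_def h_def by simp
    also have "sum h Ball = sum h ({u,v} \<union> (Au \<union> Av)) + sum h (Bu \<union> Bv)"
      unfolding Ball_def by (rule sum.union_disjoint) (use fins d3 in auto)
    also have "sum h ({u,v} \<union> (Au \<union> Av)) = sum h {u,v} + sum h (Au \<union> Av)"
      by (rule sum.union_disjoint) (use fins d1 in auto)
    also have "sum h {u,v} = 0" unfolding h_def using d1 by auto
    also have "sum h (Bu \<union> Bv) = 0"
    proof (rule sum.neutral, intro ballI)
      fix x assume x: "x \<in> Bu \<union> Bv"
      then have "x \<notin> Au \<union> Av" using d3 by blast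
      then show "h x = 0" using x unfolding h_def by simp
    qed
    also have "sum h (Au \<union> Av) = 4 * card (Au \<union> Av)" unfolding h_def by simp
    finally have sh: "sum h V = 4 * (2 * (r-1)) + 2 * (card V - (2 + 2*(r-1) + 2*((r-1)*(r-1))))"
      using cA cBall card_Diff_subset[OF finB BallV] by simp
    have cV: "2 + 2*(r-1) + 2*((r-1)*(r-1)) \<le> card V" using cBall card_mono[OF finV BallV] by simp
    have "int (triple_roman_domination_number V E) \<le> int (sum h V)" using tr_le[OF sg h3] by (simp only: of_nat_le_iff)
    also have "\<dots> \<le> 2 * int (card V) - 2 * int r ^ 2 + 3 * int r - 2"
      unfolding sh by (rule arith1[OF r2 cV])
    finally show ?thesis .
  next
    case True
    then obtain w where wV: "w \<in> V" "w \<notin> Ball" and wN: "\<And>y. E w y \<Longrightarrow> y \<in> Bu \<union> Bv" by blast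
    have w': "w \<noteq> u" "w \<noteq> v" "w \<notin> Au" "w \<notin> Av" "w \<notin> Bu" "w \<notin> Bv" using wV(2) unfolding Ball_def by auto
    have nuw: "\<not> E u w" using w' by (simp add: mAu)
    have nvw: "\<not> E v w" using w' by (simp add: mAv)
    have uniqU: "y = y'" if yy: "y \<in> Bu" "y' \<in> Bu" "E y w" "E y' w" for y y'
    proof -
      obtain a where a: "E u a" "a \<noteq> v" "E a y" "y \<noteq> u" using yy(1) unfolding mBu by blast
      obtain a' where a': "E u a'" "a' \<noteq> v" "E a' y'" "y' \<noteq> u" using yy(2) unfolding mBu by blast
      have "\<not> E a w"
      proof
        assume "E a w" then have "w \<in> Bu" unfolding mBu using a w' by blast
        then show False using w' by blast
      qed
      moreover have "\<not> E a' w"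
      proof
        assume "E a' w" then have "w \<in> Bu" unfolding mBu using a' w' by blast
        then show False using w' by blast
      qed
      ultimately show ?thesis using F10[OF a a' yy(3,4) w'(1) nuw] by blast
    qed
    have uniqV: "y = y'" if yy: "y \<in> Bv" "y' \<in> Bv" "E y w" "E y' w" for y y'
    proof -
      obtain a where a: "E v a" "a \<noteq> u" "E a y" "y \<noteq> v" using yy(1) unfolding mBv by blast
      obtain a' where a': "E v a'" "a' \<noteq> u" "E a' y'" "y' \<noteq> v" using yy(2) unfolding mBv by blast
      have "\<not> E a w"
      proof
        assume "E a w" then have "w \<in> Bv" unfolding mBv using a w' by blast
        then show False using w' by blast
      qed
      moreover have "\<not> E a' w"
      proof
        assume "E a' w" then have "w \<in> Bv" unfolding mBv using a' w' by blast
        then show False using w' by blast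
      qed
      ultimately show ?thesis using g7.F10[OF sw a a' yy(3,4) w'(2) nvw] by blast
    qed
    have cw: "card (nbhd V E w) = r" using cardN wV by blast
    have "\<exists>y1 y2. E w y1 \<and> E w y2 \<and> y1 \<noteq> y2"
    proof (rule ccontr)
      assume "\<not> ?thesis"
      then have "card (nbhd V E w) \<le> Suc 0" using finN by (auto simp: card_le_Suc0_iff_eq memN)
      then show False using cw r2 by simp
    qed
    then obtain y1 y2 where y: "E w y1" "E w y2" "y1 \<noteq> y2" by blast
    have "\<exists>bu bv. bu \<in> Bu \<and> bv \<in> Bv \<and> E w bu \<and> E w bv"
    proof -
      have "y1 \<in> Bu \<union> Bv" "y2 \<in> Bu \<union> Bv" using wN y by auto
      moreover have "\<not> (y1 \<in> Bu \<and> y2 \<in> Bu)" using uniqU y Esym by blast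
      moreover have "\<not> (y1 \<in> Bv \<and> y2 \<in> Bv)" using uniqV y Esym by blast
      ultimately show ?thesis using y by blast
    qed
    then obtain bu bv where b: "bu \<in> Bu" "bv \<in> Bv" "E w bu" "E w bv" by blast
    have "nbhd V E w \<subseteq> {bu, bv}"
    proof
      fix y assume "y \<in> nbhd V E w"
      then have "E w y" by (simp add: memN)
      then show "y \<in> {bu, bv}" using wN[of y] uniqU[of y bu] uniqV[of y bv] b Esym by blast
    qed
    then have "card (nbhd V E w) \<le> card {bu, bv}" by (intro card_mono) auto
    moreover have "card {bu, bv} \<le> 2" by (cases "bu = bv") auto
    ultimately have "r \<le> 2" using cw by simp
    then have r2': "r = 2" using r2 by simp
    obtain au where au: "E u au" "au \<noteq> v" "E au bu" "bu \<noteq> u" using b(1) unfolding mBu by blast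
    obtain av where av: "E v av" "av \<noteq> u" "E av bv" "bv \<noteq> v" using b(2) unfolding mBv by blast
    have au': "au \<in> Au" using au by (simp add: mAu)
    have av': "av \<in> Av" using av by (simp add: mAv)
    have nbu: "bu \<noteq> u" "bu \<noteq> v" "bu \<notin> Au" "bu \<notin> Av" using nBu[OF b(1)] by auto
    have nbv: "bv \<noteq> u" "bv \<noteq> v" "bv \<notin> Au" "bv \<notin> Av" using nBv[OF b(2)] by auto
    have "au \<noteq> av" using d2 au' av' by blast
    moreover have "bu \<noteq> bv" using d4 b(1,2) by blast
    moreover have "u \<noteq> au" "v \<noteq> av" using neq[OF au(1)] neq[OF av(1)] by auto
    moreover have "au \<noteq> bu" "au \<noteq> bv" "av \<noteq> bu" "av \<noteq> bv" using au' av' nbu nbv by blast+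
    moreover have "au \<noteq> w" "av \<noteq> w" "bu \<noteq> w" "bv \<noteq> w" using au' av' b(1,2) w' by blast+
    ultimately have dist: "u \<noteq> v" "u \<noteq> au" "u \<noteq> av" "u \<noteq> bu" "u \<noteq> bv" "u \<noteq> w"
       "v \<noteq> au" "v \<noteq> av" "v \<noteq> bu" "v \<noteq> bv" "v \<noteq> w"
       "au \<noteq> av" "au \<noteq> bu" "au \<noteq> bv" "au \<noteq> w"
       "av \<noteq> bu" "av \<noteq> bv" "av \<noteq> w"
       "bu \<noteq> bv" "bu \<noteq> w" "bv \<noteq> w"
      using uv' au(2) av(2) nbu nbv w' by simp_all
    have N2: "y = p \<or> y = q" if nn: "x \<in> V" "E x p" "E x q" "p \<noteq> q" "E x y" for x p q y
    proof -
      have a: "{p,q} \<subseteq> nbhd V E x" using nn(2,3) by (simp add: memN)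
      have b: "card {p,q} = card (nbhd V E x)" using nn(4) cardN[OF nn(1)] r2' by simp
      have c: "nbhd V E x = {p,q}" using card_subset_eq[OF finN a b] by simp
      have "y \<in> nbhd V E x" using nn(5) by (simp add: memN)
      then show ?thesis unfolding c by simp
    qed
    have Vs: "u \<in> V" "v \<in> V" "au \<in> V" "av \<in> V" "bu \<in> V" "bv \<in> V"
      using EV(1)[OF uv] EV(2)[OF uv] EV(2)[OF au(1)] EV(2)[OF av(1)] EV(2)[OF au(3)] EV(2)[OF av(3)] by auto
    define S where "S = {u,v,au,av,bu,bv,w}"
    have e: "E u v" "E u au" "E v u" "E v av" "E au u" "E au bu" "E av v" "E av bv"
        "E bu au" "E bu w" "E bv av" "E bv w" "E w bu" "E w bv"
      using uv au(1) uv'(1) av(1) Esym[OF au(1)] au(3) Esym[OF av(1)] av(3) Esym[OF au(3)]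
        Esym[OF b(3)] Esym[OF av(3)] Esym[OF b(4)] b(3) b(4) by auto
    have clos: "y \<in> S" if cl: "x \<in> S" "E x y" for x y
    proof -
      from cl(1) consider "x = u" | "x = v" | "x = au" | "x = av" | "x = bu" | "x = bv" | "x = w"
        unfolding S_def by blast
      then show ?thesis
      proof cases
        case 1 then show ?thesis using N2[OF Vs(1) e(1,2) dist(7), of y] cl(2) unfolding S_def by blast
      next
        case 2 then show ?thesis using N2[OF Vs(2) e(3,4) dist(3), of y] cl(2) unfolding S_def by blast
      next
        case 3 then show ?thesis using N2[OF Vs(3) e(5,6) dist(4), of y] cl(2) unfolding S_def by blast
      next
        case 4 then show ?thesis using N2[OF Vs(4) e(7,8) dist(10), of y] cl(2) unfolding S_def by blast
      next
        case 5 then show ?thesis using N2[OF Vs(5) e(9,10) dist(15), of y] cl(2) unfolding S_def by blast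
      next
        case 6 then show ?thesis using N2[OF Vs(6) e(11,12) dist(18), of y] cl(2) unfolding S_def by blast
      next
        case 7 then show ?thesis using N2[OF wV(1) e(13,14) dist(19), of y] cl(2) unfolding S_def by blast
      qed
    qed
    define h where "h x = (if x = u then 3 else if x = v then 0 else if x = av then 3
        else if x = bv then 0 else if x = au then 0 else if x \<in> V then 2 else (0::nat))" for x
    have h3: "is_3RDF V E h"
      unfolding is_3RDF_def
    proof (intro conjI ballI allI impI)
      fix x assume "x \<in> V" then show "h x \<le> 4" unfolding h_def by auto
    next
      fix x assume "x \<notin> V" then show "h x = 0" using Vs unfolding h_def by auto
    next
      fix x assume xV: "x \<in> V" and hx: "h x < 3"
      show "card (active_nbhd V E h x) + 3 \<le> sum h (insert x (active_nbhd V E h x))"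
      proof (cases "x \<in> S")
        case True
        then consider "x = u" | "x = v" | "x = au" | "x = av" | "x = bu" | "x = bv" | "x = w"
          unfolding S_def by blast
        then show ?thesis
        proof cases
          case 1 then show ?thesis using hx unfolding h_def by simp
        next
          case 2 then show ?thesis using uv' av dist Vs
            by (intro cond2[OF sg xV, of u av]) (auto simp: h_def)
        next
          case 3 then show ?thesis using au dist Vs Esym
            by (intro cond2[OF sg xV, of u bu]) (auto simp: h_def)
        next
          case 4 then show ?thesis using hx dist unfolding h_def by simp
        next
          case 5 then show ?thesis using b dist Vs Esym wV
            by (intro cond1[OF sg xV, of w]) (auto simp: h_def)
        next
          case 6 then show ?thesis using av b dist Vs Esym wV
            by (intro cond2[OF sg xV, of av w]) (auto simp: h_def)
        next
          case 7 then show ?thesis using b dist Vs Esym wV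
            by (intro cond1[OF sg xV, of bu]) (auto simp: h_def)
        qed
      next
        case xS: False
        have "nbhd V E x \<noteq> {}" using cardN[OF xV] r2' by auto
        then obtain y where y: "E x y" by (auto simp: memN)
        have "y \<notin> S" using clos[of y x] Esym[OF y] xS by blast
        then have "h y = 2" using EV(2)[OF y] unfolding h_def S_def by auto
        moreover have "h x = 2" using xS xV unfolding h_def S_def by auto
        ultimately show ?thesis by (intro cond1[OF sg xV y]) auto
      qed
    qed
    have SV: "S \<subseteq> V" unfolding S_def using Vs wV by auto
    have cS: "card S = 7" unfolding S_def using dist by simp
    have "sum h V = sum h S + sum h (V - S)"
      using sum.subset_diff[OF SV finV] by (simp add: add.commute)
    also have "sum h (V - S) = 2 * card (V - S)"
    proof -
      have "sum h (V - S) = sum (\<lambda>_. 2) (V - S)"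
        by (rule sum.cong) (auto simp: h_def S_def)
      then show ?thesis by simp
    qed
    also have "sum h S = 10" unfolding S_def using dist Vs wV by (simp add: h_def)
    finally have sh: "sum h V = 10 + 2 * (card V - 7)"
      using card_Diff_subset[OF _ SV] cS finite_subset[OF SV finV] by simp
    have cV: "7 \<le> card V" using cS card_mono[OF finV SV] by simp
    have "int (triple_roman_domination_number V E) \<le> int (sum h V)" using tr_le[OF sg h3] by (simp only: of_nat_le_iff)
    also have "\<dots> = 2 * int (card V) - 2 * int r ^ 2 + 3 * int r - 2"
      unfolding sh r2' using cV by (simp add: of_nat_diff)
    finally show ?thesis .
  qed
qed

end



theorem corollary10:
  fixes V :: "'a set" and E :: "'a \<Rightarrow> 'a \<Rightarrow> bool" and r :: nat
  assumes "simple_graph V E"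
    and "connected_graph V E"
    and "regular V E r"
    and "has_cycle V E"
    and "girth V E \<ge> 7"
  shows "int (triple_roman_domination_number V E)
           \<le> 2 * int (card V) - 2 * int r ^ 2 + 3 * int r - 2"
proof -
  have sg: "simple_graph V E" by fact
  obtain vs where c: "is_cycle V E vs" using assms(4) unfolding has_cycle_def by blast
  have gir: "7 \<le> length ws" if ws: "is_cycle V E ws" for ws
  proof -
    have "girth V E \<le> length ws" unfolding girth_def
      by (rule cInf_lower) (use ws in auto)
    then show ?thesis using assms(5) by simp
  qed
  have len: "3 \<le> length vs" and dis: "distinct vs" and ch: "\<And>i. Suc i < length vs \<Longrightarrow> E (vs ! i) (vs ! Suc i)"
    and cl: "E (last vs) (hd vs)" using c unfolding is_cycle_def by auto
  define u where "u = vs ! 0"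
  define v where "v = vs ! 1"
  have uv: "E u v" using ch[of 0] len unfolding u_def v_def by simp
  have hd: "hd vs = u" using len unfolding u_def by (cases vs) auto
  have lst: "last vs = vs ! (length vs - 1)" using len by (intro last_conv_nth) auto
  have ul: "E u (last vs)" using cl hd sg unfolding simple_graph_def by auto
  have nl: "last vs \<noteq> v" unfolding lst v_def using dis len by (simp add: nth_eq_iff_index_eq)
  have uV: "u \<in> V" using uv sg unfolding simple_graph_def by auto
  have "{v, last vs} \<subseteq> nbhd V E u" using uv ul sg unfolding simple_graph_def nbhd_def by auto
  moreover have "finite (nbhd V E u)" using sg unfolding simple_graph_def nbhd_def by auto
  ultimately have "card {v, last vs} \<le> card (nbhd V E u)" by (rule card_mono[rotated])
  then have r2: "r \<ge> 2" using nl assms(3) uV unfolding regular_def by auto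
  interpret g7 V E r u v
    using sg assms(3) gir uv r2 by unfold_locales auto
  show ?thesis by (rule main)
qed

end
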